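(* Let $N=\{1,\dots,n\}$ and let $F:2^N\to\mathbb{R}$ be quasi-submodular, given by a value oracle. The maximization procedure (described in the context) terminates after $\mathcal{O}(n)$ iterations, and its total time complexity (counting each oracle evaluation of $F$ as one step) is $\mathcal{O}(n^2)$.
   Context: For $A\subseteq N$ and $i\in N$, write $A+i=A\cup\{i\}$, $A-i=A\setminus\{i\}$, and $F(i\mid A)=F(A+i)-F(A)$. A set function $F:2^N\to\mathbb{R}$ is quasi-submodular if for all $X,Y\subseteq N$ both hold: $F(X\cap Y)\ge F(X)\Rightarrow F(Y)\ge F(X\cup Y)$, and $F(X\cap Y)>F(X)\Rightarrow F(Y)>F(X\cup Y)$. Maximization procedure: set $X_0=\emptyset$, $Y_0=N$; for $t=0,1,2,\dots$: let $U_t=\{u\in Y_t\setminus X_t: F(u\mid Y_t-u)>0\}$ and $X_{t+1}=X_t\cup U_t$; let $D_t=\{d\in Y_t\setminus X_t: F(d\mid X_t)<0\}$ and $Y_{t+1}=Y_t\setminus D_t$; if $X_{t+1}=X_t$ and $Y_{t+1}=Y_t$, stop and output the lattice $[X_t,Y_t]=\{U: X_t\subseteq U\subseteq Y_t\}$; otherwise continue with $t+1$. *)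

theory Defs
  imports Complex_Main
begin

text \<open>Set functions are modelled as F :: nat set \<Rightarrow> real; only their values on
  subsets of the ground set N matter.\<close>

definition marg :: "(nat set \<Rightarrow> real) \<Rightarrow> nat \<Rightarrow> nat set \<Rightarrow> real" where
  "marg F i A = F (insert i A) - F A"

definition quasi_submodular :: "nat set \<Rightarrow> (nat set \<Rightarrow> real) \<Rightarrow> bool" where
  "quasi_submodular N F \<longleftrightarrow>
     (\<forall>X Y. X \<subseteq> N \<longrightarrow> Y \<subseteq> N \<longrightarrow>
        (F (X \<inter> Y) \<ge> F X \<longrightarrow> F Y \<ge> F (X \<union> Y)) \<and>
        (F (X \<inter> Y) > F X \<longrightarrow> F Y > F (X \<union> Y)))"

definition up_set :: "(nat set \<Rightarrow> real) \<Rightarrow> nat set \<times> nat set \<Rightarrow> nat set" where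
  "up_set F S = {u \<in> snd S - fst S. marg F u (snd S - {u}) > 0}"

definition down_set :: "(nat set \<Rightarrow> real) \<Rightarrow> nat set \<times> nat set \<Rightarrow> nat set" where
  "down_set F S = {d \<in> snd S - fst S. marg F d (fst S) < 0}"

definition qsm_step :: "(nat set \<Rightarrow> real) \<Rightarrow> nat set \<times> nat set \<Rightarrow> nat set \<times> nat set" where
  "qsm_step F S = (fst S \<union> up_set F S, snd S - down_set F S)"

definition qsm_state :: "(nat set \<Rightarrow> real) \<Rightarrow> nat set \<Rightarrow> nat \<Rightarrow> nat set \<times> nat set" where
  "qsm_state F N t = (qsm_step F ^^ t) ({}, N)"

definition qsm_stops_at :: "(nat set \<Rightarrow> real) \<Rightarrow> nat set \<Rightarrow> nat \<Rightarrow> bool" where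
  "qsm_stops_at F N t \<longleftrightarrow> qsm_step F (qsm_state F N t) = qsm_state F N t"

definition qsm_stop_time :: "(nat set \<Rightarrow> real) \<Rightarrow> nat set \<Rightarrow> nat" where
  "qsm_stop_time F N = (LEAST t. qsm_stops_at F N t)"

text \<open>Oracle cost of iteration t: for each candidate element i in Y_t - X_t the
  procedure evaluates the two marginal gains F(i | Y_t - i) and F(i | X_t), i.e.
  four evaluations of F. The total counts iterations 0..T where T is the
  stopping iteration (the last one detects termination).\<close>

definition qsm_iter_cost :: "(nat set \<Rightarrow> real) \<Rightarrow> nat set \<Rightarrow> nat \<Rightarrow> nat" where
  "qsm_iter_cost F N t = 4 * card (snd (qsm_state F N t) - fst (qsm_state F N t))"

definition qsm_oracle_calls :: "(nat set \<Rightarrow> real) \<Rightarrow> nat set \<Rightarrow> nat" where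
  "qsm_oracle_calls F N = (\<Sum>t\<le>qsm_stop_time F N. qsm_iter_cost F N t)"

end

theory Submission
  imports Defs
begin

lemma state_suc: "qsm_state F N (Suc t) = qsm_step F (qsm_state F N t)"
  by (simp add: qsm_state_def)

lemma state_sub: "fst (qsm_state F N t) \<subseteq> N \<and> snd (qsm_state F N t) \<subseteq> N"
proof (induction t)
  case 0 then show ?case by (simp add: qsm_state_def)
next
  case (Suc t) then show ?case
    by (auto simp: state_suc qsm_step_def up_set_def)
qed

lemma step_mono: "fst (qsm_state F N t) \<subseteq> fst (qsm_state F N (Suc t))
   \<and> snd (qsm_state F N (Suc t)) \<subseteq> snd (qsm_state F N t)"
  by (auto simp: state_suc qsm_step_def)

definition phi where
  "phi F N t = card (fst (qsm_state F N t)) + (card N - card (snd (qsm_state F N t)))"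

lemma phi_le: "finite N \<Longrightarrow> phi F N t \<le> 2 * card N"
  using state_sub[of F N t] unfolding phi_def
  by (metis card_mono diff_le_self add_le_mono mult_2)

lemma phi_inc:
  assumes fin: "finite N" and ns: "\<not> qsm_stops_at F N t"
  shows "phi F N t < phi F N (Suc t)"
proof -
  let ?A = "fst (qsm_state F N t)" and ?B = "snd (qsm_state F N t)"
  let ?A' = "fst (qsm_state F N (Suc t))" and ?B' = "snd (qsm_state F N (Suc t))"
  have m: "?A \<subseteq> ?A'" "?B' \<subseteq> ?B" using step_mono by blast+
  have s: "?A' \<subseteq> N" "?B \<subseteq> N" using state_sub by blast+
  have fA': "finite ?A'" "finite ?B" using s fin finite_subset by blast+
  have "?A \<noteq> ?A' \<or> ?B \<noteq> ?B'" using ns unfolding qsm_stops_at_def state_suc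
    by (metis prod.collapse state_suc)
  then have "card ?A < card ?A' \<or> card ?B' < card ?B"
  proof
    assume "?A \<noteq> ?A'" then show ?thesis using m fA' by (meson psubset_card_mono psubsetI)
  next
    assume "?B \<noteq> ?B'" then have "card ?B' < card ?B" using m fA' by (metis psubset_card_mono psubsetI)
    then show ?thesis by simp
  qed
  moreover have "card ?A \<le> card ?A'" "card ?B' \<le> card ?B" "card ?B \<le> card N"
    using m fA' s fin by (auto intro: card_mono)
  ultimately show ?thesis unfolding phi_def by linarith
qed

lemma phi_ge: "finite N \<Longrightarrow> (\<forall>s<t. \<not> qsm_stops_at F N s) \<Longrightarrow> t \<le> phi F N t"
proof (induction t)
  case 0 then show ?case by simp
next
  case (Suc t)
  then have "t \<le> phi F N t" by simp
  moreover have "phi F N t < phi F N (Suc t)" using Suc.prems phi_inc by blast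
  ultimately show ?case by simp
qed

lemma stops_exists: "finite N \<Longrightarrow> \<exists>t\<le>2 * card N. qsm_stops_at F N t"
proof (rule ccontr)
  assume fin: "finite N" and "\<not> (\<exists>t\<le>2 * card N. qsm_stops_at F N t)"
  then have "\<forall>s<Suc (2 * card N). \<not> qsm_stops_at F N s" by auto
  then have "Suc (2 * card N) \<le> phi F N (Suc (2 * card N))" using phi_ge fin by blast
  with phi_le[OF fin, of F "Suc (2 * card N)"] show False by simp
qed

lemma cost_le: "finite N \<Longrightarrow> qsm_iter_cost F N t \<le> 4 * card N"
  unfolding qsm_iter_cost_def using state_sub[of F N t]
  by (metis Diff_subset card_mono mult_le_mono2 subset_trans)

theorem theorem3:
  "\<exists>c::real. \<forall>(n::nat) (F::nat set \<Rightarrow> real).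
     quasi_submodular {1..n} F \<longrightarrow>
       (\<exists>t. qsm_stops_at F {1..n} t) \<and>
       real (qsm_stop_time F {1..n}) \<le> c * (real n + 1) \<and>
       real (qsm_oracle_calls F {1..n}) \<le> c * (real n + 1)^2"
proof (intro exI allI impI)
  fix n :: nat and F :: "nat set \<Rightarrow> real"
  let ?N = "{1..n}"
  have fin: "finite ?N" and cN: "card ?N = n" by auto
  obtain t where t: "t \<le> 2 * n" "qsm_stops_at F ?N t" using stops_exists[OF fin, of F] cN by auto
  have T: "qsm_stop_time F ?N \<le> 2 * n"
    using Least_le[of "qsm_stops_at F ?N" t] t unfolding qsm_stop_time_def by simp
  have "qsm_oracle_calls F ?N \<le> (\<Sum>s\<le>qsm_stop_time F ?N. 4 * n)"
    unfolding qsm_oracle_calls_def using cost_le[OF fin] cN by (metis sum_mono)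
  also have "\<dots> = (qsm_stop_time F ?N + 1) * (4 * n)" by simp
  also have "\<dots> \<le> (2 * n + 1) * (4 * n)" using T by simp
  finally have C: "real (qsm_oracle_calls F ?N) \<le> real ((2 * n + 1) * (4 * n))" by linarith
  have "real ((2 * n + 1) * (4 * n)) \<le> 8 * (real n + 1)^2"
    by (simp add: power2_eq_square algebra_simps)
  show "(\<exists>t. qsm_stops_at F ?N t) \<and>
       real (qsm_stop_time F ?N) \<le> 8 * (real n + 1) \<and>
       real (qsm_oracle_calls F ?N) \<le> 8 * (real n + 1)^2"
    using t T C \<open>real ((2 * n + 1) * (4 * n)) \<le> 8 * (real n + 1)^2\<close> by auto
qed

end
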